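(* Let $M$ be the prefix matching generated by a diagonal matching rule $F$, and let $a_1\to b_1\to\cdots\to a_p\to b_p\to a_{p+1}=a_1$ be a directed cycle in $\Gamma^M$ as described in the context, with $a_i=(a_{i,0},\dots,a_{i,k})$. Then $d(a_{i,d_i-1},a_{i,d_i})=1$ for all $i$.
   Context: $G$ is a finite simple connected graph with distance $d$; $\ell(x_0,\dots,x_k)=\sum_{i=0}^{k-1}d(x_i,x_{i+1})$; sequences are elements of $I_{k,l}(G)=\{(x_0,\dots,x_k)\in V(G)^{k+1}:x_i\ne x_{i+1}\ \forall i,\ \ell=l\}$. $\Gamma$ is the directed graph on sequences with an edge $a\to b$ whenever $b$ is obtained from $a=(x_0,\dots,x_k)$ by deleting some $x_i$, $1\le i\le k-1$, with $\ell(b)=\ell(a)$. A matching is a set of pairwise vertex-disjoint edges of $\Gamma$; $\Gamma^M$ is $\Gamma$ with edges of $M$ reversed. Matching states: "unmatched", "insert$(i,v)$" (matched to $(x_0,\dots,x_i,v,x_{i+1},\dots,x_k)$), "delete$(i)$" (matched to $(x_0,\dots,\hat x_i,\dots,x_k)$). A prefix matching: whenever $(x_0,\dots,x_k)$ has state insert$(i,v)$ (resp. delete$(i)$), every sequence $(x_0,\dots,x_{i+1},y_{i+2},\dots,y_{k'})$ has the same state. A matching rule is a function $F$ from sequences to $\{\epsilon\}\cup\{\iota(v):v\in V(G)\}\cup\{\delta\}$; a prefix matching $M$ is generated by $F$ if for every sequence $(x_0,\dots,x_k)$, $k\ge1$, with unmatched prefix $(x_0,\dots,x_{k-1})$, its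 state is insert$(k-1,v)$ iff $F(x_0,\dots,x_k)=\iota(v)$ and delete$(k-1)$ iff $F(x_0,\dots,x_k)=\delta$. $F$ is valid if (1) $F(x_0,\dots,x_k)=\iota(v)$ implies $v\notin\{x_{k-1},x_k\}$, $d(x_{k-1},v)+d(v,x_k)=d(x_{k-1},x_k)$, $F(x_0,\dots,x_{k-1},v)=\epsilon$, $F(x_0,\dots,x_{k-1},v,x_k)=\delta$; (2) $F(x_0,\dots,x_k)=\delta$ implies $d(x_{k-2},x_{k-1})+d(x_{k-1},x_k)=d(x_{k-2},x_k)$ and $F(x_0,\dots,x_{k-2},x_k)=\iota(x_{k-1})$. A valid $F$ is diagonal if, w.r.t. the prefix matching it generates, $F(x_0,\dots,x_k)\ne\epsilon$ for every sequence with unmatched prefix and $d(x_{k-1},x_k)\ge2$. Cycle setting: $a_i\in I_{k,l}(G)$, $b_i\in I_{k-1,l}(G)$, each $a_i\to b_i$ is an edge of $\Gamma$ not in $M$, each $b_i\to a_{i+1}$ is a reversed edge of $M$; $d_i$ is the position of the entry of $a_i$ deleted to obtain $b_i$; $a_{i+1}=(b_{i,0},\dots,b_{i,c_i},u_i,b_{i,c_i+1},\dots,b_{i,k-1})$ where $b_i=(b_{i,0},\dots,b_{i,k-1})$; indices $i$ are taken modulo $p$. *)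

theory Defs
  imports Main
begin

definition walk :: "('v \<Rightarrow> 'v \<Rightarrow> bool) \<Rightarrow> 'v list \<Rightarrow> bool" where
  "walk E xs \<longleftrightarrow> xs \<noteq> [] \<and> (\<forall>i. i + 1 < length xs \<longrightarrow> E (xs ! i) (xs ! (i + 1)))"

definition fin_simple_connected_graph :: "'v set \<Rightarrow> ('v \<Rightarrow> 'v \<Rightarrow> bool) \<Rightarrow> bool" where
  "fin_simple_connected_graph V E \<longleftrightarrow>
     finite V \<and> V \<noteq> {} \<and>
     (\<forall>x y. E x y \<longrightarrow> x \<in> V \<and> y \<in> V) \<and>
     (\<forall>x y. E x y \<longrightarrow> E y x) \<and>
     (\<forall>x. \<not> E x x) \<and>
     (\<forall>x\<in>V. \<forall>y\<in>V. \<exists>xs. walk E xs \<and> hd xs = x \<and> last xs = y)"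

definition gdist :: "('v \<Rightarrow> 'v \<Rightarrow> bool) \<Rightarrow> 'v \<Rightarrow> 'v \<Rightarrow> nat" where
  "gdist E x y = (LEAST n. \<exists>xs. walk E xs \<and> hd xs = x \<and> last xs = y \<and> length xs = n + 1)"

definition ell :: "('v \<Rightarrow> 'v \<Rightarrow> bool) \<Rightarrow> 'v list \<Rightarrow> nat" where
  "ell E xs = (\<Sum>i<length xs - 1. gdist E (xs ! i) (xs ! (i + 1)))"

text \<open>A sequence: an element of some I_{k,l}(G), i.e. a nonempty list of vertices
  with consecutive entries distinct (k = length - 1, l = ell).\<close>
definition is_seq :: "'v set \<Rightarrow> 'v list \<Rightarrow> bool" where
  "is_seq V xs \<longleftrightarrow> xs \<noteq> [] \<and> set xs \<subseteq> V \<and>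
     (\<forall>i. i + 1 < length xs \<longrightarrow> xs ! i \<noteq> xs ! (i + 1))"

definition del_at :: "nat \<Rightarrow> 'v list \<Rightarrow> 'v list" where
  "del_at i xs = take i xs @ drop (i + 1) xs"

definition ins_after :: "nat \<Rightarrow> 'v \<Rightarrow> 'v list \<Rightarrow> 'v list" where
  "ins_after i v xs = take (i + 1) xs @ v # drop (i + 1) xs"

definition gamma_edge :: "'v set \<Rightarrow> ('v \<Rightarrow> 'v \<Rightarrow> bool) \<Rightarrow> 'v list \<Rightarrow> 'v list \<Rightarrow> bool" where
  "gamma_edge V E a b \<longleftrightarrow> is_seq V a \<and> is_seq V b \<and>
     (\<exists>i. 1 \<le> i \<and> i + 1 < length a \<and> b = del_at i a) \<and> ell E b = ell E a"

definition is_matching :: "'v set \<Rightarrow> ('v \<Rightarrow> 'v \<Rightarrow> bool) \<Rightarrow> ('v list \<times> 'v list) set \<Rightarrow> bool" where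
  "is_matching V E M \<longleftrightarrow> (\<forall>(a, b)\<in>M. gamma_edge V E a b) \<and>
     (\<forall>e1\<in>M. \<forall>e2\<in>M. e1 \<noteq> e2 \<longrightarrow> {fst e1, snd e1} \<inter> {fst e2, snd e2} = {})"

datatype 'v mstate = Unmatched | Ins nat 'v | Del nat

fun has_state :: "('v list \<times> 'v list) set \<Rightarrow> 'v list \<Rightarrow> 'v mstate \<Rightarrow> bool" where
  "has_state M x Unmatched \<longleftrightarrow> (\<forall>y. (x, y) \<notin> M \<and> (y, x) \<notin> M)"
| "has_state M x (Ins i v) \<longleftrightarrow> (ins_after i v x, x) \<in> M"
| "has_state M x (Del i) \<longleftrightarrow> (x, del_at i x) \<in> M"

definition prefix_matching :: "'v set \<Rightarrow> ('v \<Rightarrow> 'v \<Rightarrow> bool) \<Rightarrow> ('v list \<times> 'v list) set \<Rightarrow> bool" where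
  "prefix_matching V E M \<longleftrightarrow> is_matching V E M \<and>
     (\<forall>x i v y. is_seq V x \<and> has_state M x (Ins i v) \<and> is_seq V y \<and> take (i + 2) y = take (i + 2) x
        \<longrightarrow> has_state M y (Ins i v)) \<and>
     (\<forall>x i y. is_seq V x \<and> has_state M x (Del i) \<and> is_seq V y \<and> take (i + 2) y = take (i + 2) x
        \<longrightarrow> has_state M y (Del i))"

datatype 'v rule_val = Eps | Iota 'v | Delta

definition generates :: "'v set \<Rightarrow> ('v \<Rightarrow> 'v \<Rightarrow> bool) \<Rightarrow> ('v list \<Rightarrow> 'v rule_val)
    \<Rightarrow> ('v list \<times> 'v list) set \<Rightarrow> bool" where
  "generates V E F M \<longleftrightarrow> prefix_matching V E M \<and>
     (\<forall>x. is_seq V x \<and> 2 \<le> length x \<and> has_state M (butlast x) Unmatched \<longrightarrow>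
        (\<forall>v. has_state M x (Ins (length x - 2) v) \<longleftrightarrow> F x = Iota v) \<and>
        (has_state M x (Del (length x - 2)) \<longleftrightarrow> F x = Delta))"

text \<open>For x = (x_0,...,x_k): k = length x - 1, so x_{k-1} = x ! (length x - 2) etc.\<close>
definition valid_rule :: "'v set \<Rightarrow> ('v \<Rightarrow> 'v \<Rightarrow> bool) \<Rightarrow> ('v list \<Rightarrow> 'v rule_val) \<Rightarrow> bool" where
  "valid_rule V E F \<longleftrightarrow>
     (\<forall>x v. is_seq V x \<and> F x = Iota v \<longrightarrow>
        2 \<le> length x \<and> v \<in> V \<and> v \<noteq> x ! (length x - 2) \<and> v \<noteq> last x \<and>
        gdist E (x ! (length x - 2)) v + gdist E v (last x) = gdist E (x ! (length x - 2)) (last x) \<and>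
        F (butlast x @ [v]) = Eps \<and> F (butlast x @ [v, last x]) = Delta) \<and>
     (\<forall>x. is_seq V x \<and> F x = Delta \<longrightarrow>
        3 \<le> length x \<and>
        gdist E (x ! (length x - 3)) (x ! (length x - 2)) + gdist E (x ! (length x - 2)) (last x)
          = gdist E (x ! (length x - 3)) (last x) \<and>
        F (take (length x - 2) x @ [last x]) = Iota (x ! (length x - 2)))"

definition diagonal_rule :: "'v set \<Rightarrow> ('v \<Rightarrow> 'v \<Rightarrow> bool) \<Rightarrow> ('v list \<Rightarrow> 'v rule_val)
    \<Rightarrow> ('v list \<times> 'v list) set \<Rightarrow> bool" where
  "diagonal_rule V E F M \<longleftrightarrow> valid_rule V E F \<and>
     (\<forall>x. is_seq V x \<and> 2 \<le> length x \<and> has_state M (butlast x) Unmatched \<and>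
        2 \<le> gdist E (x ! (length x - 2)) (last x) \<longrightarrow> F x \<noteq> Eps)"

end

theory Submission
  imports Defs
begin


lemma ell_Nil[simp]: "ell E [] = 0" by (simp add: ell_def)
lemma ell_single[simp]: "ell E [x] = 0" by (simp add: ell_def)
lemma ell_Cons2[simp]: "ell E (x # y # zs) = gdist E x y + ell E (y # zs)"
  unfolding ell_def by (simp add: sum.lessThan_Suc_shift del: sum.lessThan_Suc)

lemma ell_append: "xs \<noteq> [] \<Longrightarrow> ell E (xs @ y # ys) = ell E xs + gdist E (last xs) y + ell E (y # ys)"
proof (induction xs rule: induct_list012)
  case (3 x1 x2 zs)
  then show ?case by simp
qed auto

lemma del_at_nth: "m + 1 < length xs \<Longrightarrow> del_at i xs ! m = (if m < i then xs ! m else xs ! Suc m)"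
  unfolding del_at_def by (auto simp: nth_append min_def)

lemma del_at_len: "i < length xs \<Longrightarrow> length (del_at i xs) = length xs - 1"
  unfolding del_at_def by auto

lemma del_at_eq_False:
  assumes "is_seq V xs" "i < j" "j < length xs" "del_at i xs = del_at j xs"
  shows False
proof -
  have "del_at i xs ! i = del_at j xs ! i" using assms by simp
  moreover have "del_at i xs ! i = xs ! Suc i" using assms by (subst del_at_nth) auto
  moreover have "del_at j xs ! i = xs ! i" using assms by (simp add: del_at_nth)
  ultimately have "xs ! i = xs ! Suc i" by simp
  moreover have "Suc i < length xs" using assms by simp
  ultimately show False using assms(1) unfolding is_seq_def by auto
qed

lemma del_at_big: "length xs \<le> i \<Longrightarrow> del_at i xs = xs"
  unfolding del_at_def by simp

lemma ins_del: "1 \<le> j \<Longrightarrow> j < length X \<Longrightarrow> ins_after (j - 1) (X ! j) (del_at j X) = X"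
  unfolding ins_after_def del_at_def
  by (simp add: min_def) (metis Cons_nth_drop_Suc Suc_eq_plus1 append_take_drop_id)

lemma ins_len: "length (ins_after i v xs) = length xs + 1"
  unfolding ins_after_def by auto

lemma is_seq_take: "is_seq V xs \<Longrightarrow> 1 \<le> m \<Longrightarrow> is_seq V (take m xs)"
  unfolding is_seq_def by (auto dest: in_set_takeD)

lemma decomp: "d + 1 < length a \<Longrightarrow> a = take d a @ a ! d # a ! (d+1) # drop (d+2) a"
  by (metis Cons_nth_drop_Suc Suc_eq_plus1 add_2_eq_Suc' add_lessD1 append_take_drop_id)

lemma last_take: "1 \<le> d \<Longrightarrow> d \<le> length a \<Longrightarrow> last (take d a) = a ! (d - 1)"
  by (cases "take d a = []") (auto simp: last_conv_nth min_def)



definition phi :: "('v \<Rightarrow> 'v \<Rightarrow> bool) \<Rightarrow> nat \<Rightarrow> 'v list \<Rightarrow> nat" where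
  "phi E K x = (\<Sum>j<K. ell E (take j x))"

lemma phi_step:
  assumes d1: "1 \<le> d" and dl: "d + 1 < length a" and dK: "d + 1 < K"
    and el: "ell E a = ell E (take d a @ v # drop (d+1) a)"
  shows "phi E K a + gdist E (a!(d-1)) v = phi E K (take d a @ v # drop (d+1) a) + gdist E (a!(d-1)) (a!d)"
proof -
  define A where "A = take d a"
  define w where "w = a ! d"
  define z where "z = a ! (d+1)"
  define C where "C = drop (d+2) a"
  have a: "a = A @ w # z # C" unfolding A_def w_def z_def C_def using decomp[OF dl] .
  have dr: "drop (d+1) a = z # C" unfolding z_def C_def using dl
    by (metis Cons_nth_drop_Suc Suc_eq_plus1 add_2_eq_Suc')
  define a' where "a' = A @ v # z # C"
  have a'eq: "take d a @ v # drop (d+1) a = a'" unfolding a'_def A_def dr ..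
  have lenA: "length A = d" unfolding A_def using dl by simp
  have Ane: "A \<noteq> []" using lenA d1 by auto
  have lA: "last A = a ! (d-1)" unfolding A_def using d1 dl by (simp add: last_take)
  have key: "gdist E (last A) w + gdist E w z = gdist E (last A) v + gdist E v z"
  proof -
    have "ell E a = ell E (A @ w # z # C)" using a by simp
    also have "\<dots> = ell E A + gdist E (last A) w + gdist E w z + ell E (z # C)"
      by (simp add: ell_append[OF Ane])
    finally have 1: "ell E a = ell E A + gdist E (last A) w + gdist E w z + ell E (z # C)" .
    have 2: "ell E a' = ell E A + gdist E (last A) v + gdist E v z + ell E (z # C)"
      unfolding a'_def by (simp add: ell_append[OF Ane])
    show ?thesis using el 1 2 unfolding a'eq by simp
  qed
  have per: "ell E (take j a) + (if j = d+1 then gdist E (last A) v else 0)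
      = ell E (take j a') + (if j = d+1 then gdist E (last A) w else 0)" for j
  proof -
    consider "j \<le> d" | "j = d + 1" | t where "j = d + 2 + t" proof -
      have "j \<le> d \<or> j = d + 1 \<or> (\<exists>t. j = d + 2 + t)" by presburger
      then show ?thesis using that by blast
    qed
    then show ?thesis
    proof cases
      case 1
      then show ?thesis unfolding a'_def by (subst a) (simp add: lenA)
    next
      case 2
      then show ?thesis unfolding a'_def by (subst a) (simp add: lenA ell_append[OF Ane])
    next
      case 3
      then have "take j a = A @ w # z # take t C" "take j a' = A @ v # z # take t C"
      proof -
        have jd: "j - d = Suc (Suc t)" and tA: "take j A = A" using 3 lenA by auto
        show "take j a = A @ w # z # take t C" by (subst a) (simp add: lenA jd tA)
        show "take j a' = A @ v # z # take t C" unfolding a'_def by (simp add: lenA jd tA)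
      qed
      then show ?thesis using 3 key by (simp add: ell_append[OF Ane])
    qed
  qed
  have "(\<Sum>j<K. ell E (take j a) + (if j = d+1 then gdist E (last A) v else 0))
      = (\<Sum>j<K. ell E (take j a') + (if j = d+1 then gdist E (last A) w else 0))"
    using per by simp
  then show ?thesis unfolding phi_def sum.distrib a'eq using dK lA w_def by simp
qed



lemma gdist_pos:
  assumes G: "fin_simple_connected_graph V E" and "x \<in> V" "y \<in> V" "x \<noteq> y"
  shows "1 \<le> gdist E x y"
proof (rule ccontr)
  assume "\<not> 1 \<le> gdist E x y"
  hence g0: "gdist E x y = 0" by simp
  obtain xs where xs: "walk E xs" "hd xs = x" "last xs = y"
    using G assms(2,3) unfolding fin_simple_connected_graph_def by blast
  have ne: "xs \<noteq> []" using xs(1) unfolding walk_def by simp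
  let ?P = "\<lambda>n. \<exists>xs. walk E xs \<and> hd xs = x \<and> last xs = y \<and> length xs = n + 1"
  have "?P (length xs - 1)" using xs ne by (intro exI[of _ xs]) auto
  hence "?P (Least ?P)" by (rule LeastI)
  hence "?P 0" using g0 unfolding gdist_def by simp
  then obtain ws where "hd ws = x" "last ws = y" "length ws = 1" by auto
  then show False using assms(4) by (cases ws) auto
qed

lemma is_seq_snoc: "is_seq V xs \<Longrightarrow> v \<in> V \<Longrightarrow> last xs \<noteq> v \<Longrightarrow> is_seq V (xs @ [v])"
  unfolding is_seq_def
proof (intro conjI allI impI)
  fix i assume A: "xs \<noteq> [] \<and> set xs \<subseteq> V \<and> (\<forall>i. i + 1 < length xs \<longrightarrow> xs ! i \<noteq> xs ! (i + 1))"
    "v \<in> V" "last xs \<noteq> v" "i + 1 < length (xs @ [v])"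
  show "(xs @ [v]) ! i \<noteq> (xs @ [v]) ! (i + 1)"
  proof (cases "i + 1 < length xs")
    case True then show ?thesis using A by (simp add: nth_append)
  next
    case False
    hence "i = length xs - 1" using A by simp
    then show ?thesis using A by (simp add: nth_append last_conv_nth)
  qed
qed auto

lemma gamma_len: "gamma_edge V E x y \<Longrightarrow> length x = length y + 1"
  unfolding gamma_edge_def by (auto simp: del_at_len)

lemma step:
  assumes gen: "generates V E F M" and diag: "diagonal_rule V E F M"
    and G: "fin_simple_connected_graph V E"
    and sa: "is_seq V a" and sb: "is_seq V b"
    and elab: "ell E b = ell E a"
    and d1: "1 \<le> d" and dl: "d + 1 < length a" and bd: "b = del_at d a"
    and Ma'b: "(a', b) \<in> M" and Mae: "(a, del_at e a) \<in> M" and e1: "e + 1 < length a"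
  shows "\<exists>v. a' = take d a @ v # drop (d+1) a \<and> gdist E (a!(d-1)) v \<le> 1"
proof -
  have PM: "prefix_matching V E M" using gen unfolding generates_def by simp
  have IM: "is_matching V E M" using PM unfolding prefix_matching_def by simp
  have edge: "gamma_edge V E x y" if "(x,y) \<in> M" for x y
    using IM that unfolding is_matching_def by blast
  have share: "x = x' \<and> y = y'" if "(x,y) \<in> M" "(x',y') \<in> M" "x = x' \<or> x = y' \<or> y = x' \<or> y = y'" for x y x' y'
  proof (rule ccontr)
    assume "\<not> (x = x' \<and> y = y')"
    hence "(x,y) \<noteq> (x',y')" by simp
    moreover have "\<forall>e1\<in>M. \<forall>e2\<in>M. e1 \<noteq> e2 \<longrightarrow> {fst e1, snd e1} \<inter> {fst e2, snd e2} = {}"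
      using IM unfolding is_matching_def by blast
    ultimately have "{x, y} \<inter> {x', y'} = {}" using that(1,2) by force
    then show False using that(3) by auto
  qed
  have pre_del: "(y, del_at i y) \<in> M" if "is_seq V x" "(x, del_at i x) \<in> M" "is_seq V y" "take (i+2) y = take (i+2) x" for x y i
  proof -
    have "has_state M x (Del i)" using that by simp
    then have "has_state M y (Del i)" using PM that(1,3,4) unfolding prefix_matching_def by blast
    then show ?thesis by simp
  qed
  have pre_ins: "(ins_after i v y, y) \<in> M" if "is_seq V x" "(ins_after i v x, x) \<in> M" "is_seq V y" "take (i+2) y = take (i+2) x" for x y i v
  proof -
    have "has_state M x (Ins i v)" using that by simp
    then have "has_state M y (Ins i v)" using PM that(1,3,4) unfolding prefix_matching_def by blast
    then show ?thesis by simp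
  qed
  have lenb: "length b = length a - 1" using bd dl by (simp add: del_at_len)
  have la': "length a' = length b + 1" using edge[OF Ma'b] by (rule gamma_len)
  have dA: "d \<le> e + 1"
  proof (rule ccontr)
    assume "\<not> d \<le> e + 1"
    hence "take (e+2) b = take (e+2) a" unfolding bd del_at_def by (simp add: min_def)
    hence "(b, del_at e b) \<in> M" using pre_del[OF sa Mae sb] by simp
    from share[OF this Ma'b] have "b = a'" by simp
    then show False using la' by simp
  qed
  have unm: "has_state M (take m a) Unmatched" if mle: "m \<le> e + 1" for m
  proof (rule ccontr)
    assume "\<not> has_state M (take m a) Unmatched"
    then obtain z where "(take m a, z) \<in> M \<or> (z, take m a) \<in> M" by auto
    then show False
    proof
      assume M1: "(take m a, z) \<in> M"
      then obtain j where j: "1 \<le> j" "j + 1 < length (take m a)" "z = del_at j (take m a)"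
        and st: "is_seq V (take m a)"
        using edge[OF M1] unfolding gamma_edge_def by blast
      have "j + 2 \<le> m" using j by simp
      hence "take (j+2) a = take (j+2) (take m a)" by (simp add: min_def)
      hence "(a, del_at j a) \<in> M" using pre_del[OF st _ sa] M1 j(3) by simp
      from share[OF this Mae] have "del_at j a = del_at e a" by simp
      moreover have "j < e" using j mle by simp
      ultimately show False using del_at_eq_False[OF sa, of j e] e1 by simp
    next
      assume M2: "(z, take m a) \<in> M"
      then obtain j where j: "1 \<le> j" "j + 1 < length z" "take m a = del_at j z"
        and st: "is_seq V (take m a)"
        using edge[OF M2] unfolding gamma_edge_def by blast
      have lz: "length z = length (take m a) + 1" using gamma_len[OF edge[OF M2]] .
      have zi: "z = ins_after (j - 1) (z ! j) (take m a)" using ins_del[of j z] j by simp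
      have "j + 1 \<le> length (take m a)" using j(2) lz by simp
      hence "j + 1 \<le> m" by simp
      hence "take (j - 1 + 2) a = take (j - 1 + 2) (take m a)" using j(1) by (simp add: min_def)
      moreover have "(ins_after (j - 1) (z ! j) (take m a), take m a) \<in> M" using M2 zi by simp
      ultimately have "(ins_after (j - 1) (z ! j) a, a) \<in> M" using pre_ins[OF st _ sa] by blast
      from share[OF this Mae] have "ins_after (j - 1) (z ! j) a = a" by simp
      then show False using ins_len[of "j-1" "z!j" a] by simp
    qed
  qed
  define x where "x = take (d+1) b"
  have xeq: "x = take d a @ [a ! (d+1)]" unfolding x_def bd del_at_def using dl
    by (simp add: take_Suc_conv_app_nth min_def)
  have sx: "is_seq V x" unfolding x_def using is_seq_take[OF sb] by simp
  have lx: "length x = d + 1" using xeq dl by simp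
  have bx: "butlast x = take d a" using xeq by simp
  have x2: "x ! (length x - 2) = a ! (d - 1)" using xeq lx d1 dl by (simp add: nth_append)
  have lastx: "last x = a ! (d+1)" using xeq by simp
  have inV: "a ! i \<in> V" if "i < length a" for i using sa that unfolding is_seq_def by auto
  have nxt: "a ! i \<noteq> a ! Suc i" if "Suc i < length a" for i using sa that unfolding is_seq_def by auto
  have Ane: "take d a \<noteq> []" using d1 dl by (cases a) auto
  have lA: "last (take d a) = a ! (d-1)" using d1 dl by (simp add: last_take)
  have dropb: "drop d b = a ! (d+1) # drop (d+2) a" unfolding bd del_at_def using dl
    by (simp add: min_def) (metis Cons_nth_drop_Suc Suc_eq_plus1 add_2_eq_Suc')
  have takeb: "take d b = take d a" unfolding bd del_at_def using dl by (simp add: min_def)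
  have bdec: "b = take d a @ a ! (d+1) # drop (d+2) a" using takeb dropb
    by (metis append_take_drop_id)
  have "ell E a = ell E (take d a) + gdist E (a!(d-1)) (a!d) + gdist E (a!d) (a!(d+1)) + ell E (a!(d+1) # drop (d+2) a)"
    by (subst decomp[OF dl]) (simp add: ell_append[OF Ane] lA)
  moreover have "ell E b = ell E (take d a) + gdist E (a!(d-1)) (a!(d+1)) + ell E (a!(d+1) # drop (d+2) a)"
    by (subst bdec) (simp add: ell_append[OF Ane] lA)
  ultimately have geo: "gdist E (a!(d-1)) (a!(d+1)) = gdist E (a!(d-1)) (a!d) + gdist E (a!d) (a!(d+1))"
    using elab by simp
  have "1 \<le> gdist E (a!(d-1)) (a!d)"
  proof (rule gdist_pos[OF G])
    show "a ! (d-1) \<in> V" "a ! d \<in> V" using inV dl by auto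
    show "a ! (d-1) \<noteq> a ! d" using nxt[of "d-1"] d1 dl by simp
  qed
  moreover have "1 \<le> gdist E (a!d) (a!(d+1))" using gdist_pos[OF G] inV nxt dl by simp
  ultimately have g2: "2 \<le> gdist E (x ! (length x - 2)) (last x)" using geo x2 lastx by simp
  have ux: "has_state M (butlast x) Unmatched" using bx unm dA by simp
  have DG: "\<And>x. is_seq V x \<Longrightarrow> 2 \<le> length x \<Longrightarrow> has_state M (butlast x) Unmatched \<Longrightarrow>
        2 \<le> gdist E (x ! (length x - 2)) (last x) \<Longrightarrow> F x \<noteq> Eps"
    using diag unfolding diagonal_rule_def by blast
  have GN: "\<And>x. is_seq V x \<Longrightarrow> 2 \<le> length x \<Longrightarrow> has_state M (butlast x) Unmatched \<Longrightarrow>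
        (\<forall>v. has_state M x (Ins (length x - 2) v) \<longleftrightarrow> F x = Iota v) \<and>
        (has_state M x (Del (length x - 2)) \<longleftrightarrow> F x = Delta)"
    using gen unfolding generates_def by blast
  have Fx: "F x \<noteq> Eps" using DG[OF sx _ ux g2] lx d1 by simp
  have genx: "(\<forall>v. has_state M x (Ins (d - 1) v) \<longleftrightarrow> F x = Iota v) \<and> (has_state M x (Del (d - 1)) \<longleftrightarrow> F x = Delta)"
    using GN[OF sx _ ux] lx d1 by simp
  have bx2: "take (d - 1 + 2) b = take (d - 1 + 2) x" using d1 unfolding x_def by simp
  show ?thesis
  proof (cases "F x")
    case Eps then show ?thesis using Fx by simp
  next
    case Delta
    hence "(x, del_at (d-1) x) \<in> M" using genx by simp
    hence "(b, del_at (d-1) b) \<in> M" using pre_del[OF sx _ sb bx2] by simp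
    from share[OF this Ma'b] have "b = a'" by simp
    then show ?thesis using la' by simp
  next
    case (Iota v)
    hence "(ins_after (d-1) v x, x) \<in> M" using genx by simp
    hence "(ins_after (d-1) v b, b) \<in> M" using pre_ins[OF sx _ sb bx2] by simp
    from share[OF this Ma'b] have a'eq: "a' = ins_after (d-1) v b" by simp
    have dd: "drop (Suc d) a = a ! Suc d # drop (Suc (Suc d)) a"
      using Cons_nth_drop_Suc[of "Suc d" a] dl by simp
    have a'eq2: "a' = take d a @ v # drop (d+1) a"
      unfolding a'eq ins_after_def using d1 takeb dropb dd by simp
    have VR: "valid_rule V E F" using diag unfolding diagonal_rule_def by blast
    have val: "v \<in> V \<and> v \<noteq> x ! (length x - 2) \<and> F (butlast x @ [v]) = Eps"
      using VR sx Iota unfolding valid_rule_def by blast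
    have sy: "is_seq V (take d a @ [v])"
      using is_seq_snoc[OF is_seq_take[OF sa d1], of v] val x2 lA by metis
    have "gdist E (a!(d-1)) v \<le> 1"
    proof (rule ccontr)
      assume "\<not> ?thesis"
      hence "2 \<le> gdist E ((take d a @ [v]) ! (length (take d a @ [v]) - 2)) (last (take d a @ [v]))"
        using d1 dl by (simp add: nth_append)
      moreover have "has_state M (butlast (take d a @ [v])) Unmatched" using unm dA by simp
      ultimately have "F (take d a @ [v]) \<noteq> Eps"
        using DG[OF sy] d1 dl by simp
      then show False using val bx by simp
    qed
    then show ?thesis using a'eq2 by blast
  qed
qed



lemma sum_rot: "1 \<le> (p::nat) \<Longrightarrow> (\<Sum>i<p. f (Suc i mod p)) = (\<Sum>i<p. (f i :: nat))"
proof -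
  assume "1 \<le> p"
  then obtain q where q: "p = Suc q" by (cases p) auto
  have "(\<Sum>i<Suc q. f (Suc i mod Suc q)) = (\<Sum>i<q. f (Suc i mod Suc q)) + f 0" by simp
  also have "(\<Sum>i<q. f (Suc i mod Suc q)) = (\<Sum>i<q. f (Suc i))" by (rule sum.cong) auto
  also have "\<dots> + f 0 = (\<Sum>i<Suc q. f i)" by (simp add: sum.lessThan_Suc_shift del: sum.lessThan_Suc)
  finally show ?thesis using q by simp
qed

theorem corollary3p9:
  fixes V :: "'v set" and E :: "'v \<Rightarrow> 'v \<Rightarrow> bool"
    and F :: "'v list \<Rightarrow> 'v rule_val" and M :: "('v list \<times> 'v list) set"
    and p k l :: nat and a b :: "nat \<Rightarrow> 'v list" and d :: "nat \<Rightarrow> nat"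
  assumes G: "fin_simple_connected_graph V E"
    and gen: "generates V E F M"
    and diag: "diagonal_rule V E F M"
    and p: "1 \<le> p"
    and a_seq: "\<forall>i<p. is_seq V (a i) \<and> length (a i) = k + 1 \<and> ell E (a i) = l"
    and b_seq: "\<forall>i<p. is_seq V (b i) \<and> length (b i) = k \<and> ell E (b i) = l"
    and ab_edge: "\<forall>i<p. gamma_edge V E (a i) (b i) \<and> (a i, b i) \<notin> M"
    and d_pos: "\<forall>i<p. 1 \<le> d i \<and> d i + 1 < length (a i) \<and> b i = del_at (d i) (a i)"
    and ba_edge: "\<forall>i<p. (a (Suc i mod p), b i) \<in> M"
  shows "\<forall>i<p. gdist E (a i ! (d i - 1)) (a i ! d i) = 1"
proof -
  have PM: "prefix_matching V E M" using gen unfolding generates_def by simp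
  have IM: "is_matching V E M" using PM unfolding prefix_matching_def by simp
  have edge: "gamma_edge V E x y" if "(x,y) \<in> M" for x y
    using IM that unfolding is_matching_def by blast
  define \<delta> where "\<delta> i = gdist E (a i ! (d i - 1)) (a i ! d i)" for i
  have stepi: "\<exists>x'. x' \<le> 1 \<and> 1 \<le> \<delta> i \<and> phi E (k+2) (a i) + x' = phi E (k+2) (a (Suc i mod p)) + \<delta> i"
    if ip: "i < p" for i
  proof -
    obtain i' where i': "i' < p" "Suc i' mod p = i"
    proof (cases i)
      case 0 then show ?thesis using that[of "p - 1"] p by auto
    next
      case (Suc j) then show ?thesis using that[of j] ip by auto
    qed
    have Mprev: "(a i, b i') \<in> M" using ba_edge i' by auto
    obtain e where e: "1 \<le> e" "e + 1 < length (a i)" "b i' = del_at e (a i)"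
      using edge[OF Mprev] unfolding gamma_edge_def by blast
    have sp: "Suc i mod p < p" using p by simp
    have ai: "is_seq V (a i)" "length (a i) = k + 1" "ell E (a i) = l" using a_seq ip by auto
    have bi: "is_seq V (b i)" "ell E (b i) = l" using b_seq ip by auto
    have a'i: "ell E (a (Suc i mod p)) = l" using a_seq sp by auto
    have di: "1 \<le> d i" "d i + 1 < length (a i)" "b i = del_at (d i) (a i)" using d_pos ip by auto
    obtain v where v: "a (Suc i mod p) = take (d i) (a i) @ v # drop (d i + 1) (a i)"
      "gdist E (a i ! (d i - 1)) v \<le> 1"
      using step[OF gen diag G ai(1) bi(1) _ di(1) di(2) di(3), of "a (Suc i mod p)" e]
        bi(2) ai(3) ba_edge ip Mprev e by auto
    have ph: "phi E (k+2) (a i) + gdist E (a i ! (d i - 1)) v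
        = phi E (k+2) (a (Suc i mod p)) + \<delta> i"
      unfolding \<delta>_def v(1) using phi_step[OF di(1) di(2), of "k+2" E v] di ai a'i v(1) by simp
    have "1 \<le> \<delta> i" unfolding \<delta>_def
    proof (rule gdist_pos[OF G])
      show "a i ! (d i - 1) \<in> V" "a i ! d i \<in> V" using ai(1) di unfolding is_seq_def
        by (auto intro!: nth_mem[THEN subsetD[rotated]])
      show "a i ! (d i - 1) \<noteq> a i ! d i" using ai(1) di unfolding is_seq_def
        by (metis Suc_eq_plus1 add_lessD1 le_add_diff_inverse2)
    qed
    then show ?thesis using ph v(2) by blast
  qed
  then obtain x' where x': "\<And>i. i < p \<Longrightarrow> x' i \<le> 1 \<and> 1 \<le> \<delta> i \<and>
      phi E (k+2) (a i) + x' i = phi E (k+2) (a (Suc i mod p)) + \<delta> i"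
    by metis
  have "(\<Sum>i<p. phi E (k+2) (a i) + x' i) = (\<Sum>i<p. phi E (k+2) (a (Suc i mod p)) + \<delta> i)"
    using x' by (intro sum.cong) auto
  hence "(\<Sum>i<p. phi E (k+2) (a i)) + (\<Sum>i<p. x' i) = (\<Sum>i<p. phi E (k+2) (a i)) + (\<Sum>i<p. \<delta> i)"
    using sum_rot[OF p, of "\<lambda>j. phi E (k+2) (a j)"] by (simp add: sum.distrib)
  hence eqs: "(\<Sum>i<p. x' i) = (\<Sum>i<p. \<delta> i)" by simp
  have "(\<Sum>i<p. x' i) \<le> (\<Sum>i<p. (1::nat))" using x' by (intro sum_mono) auto
  hence sle: "(\<Sum>i<p. \<delta> i) \<le> p" using eqs by simp
  show ?thesis
  proof (intro allI impI)
    fix j assume jp: "j < p"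
    show "gdist E (a j ! (d j - 1)) (a j ! d j) = 1"
    proof (rule ccontr)
      assume "\<not> ?thesis"
      hence "2 \<le> \<delta> j" using x'[OF jp] unfolding \<delta>_def by simp
      have "(\<Sum>i<p. \<delta> i) = \<delta> j + (\<Sum>i\<in>{..<p} - {j}. \<delta> i)"
        using jp by (simp add: sum.remove)
      moreover have "(\<Sum>i\<in>{..<p} - {j}. (1::nat)) \<le> (\<Sum>i\<in>{..<p} - {j}. \<delta> i)"
        using x' by (intro sum_mono) auto
      moreover have "(\<Sum>i\<in>{..<p} - {j}. (1::nat)) = p - 1" using jp by simp
      ultimately show False using \<open>2 \<le> \<delta> j\<close> sle jp by linarith
    qed
  qed
qed

end
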